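(* Let $\xi$ be a current with $|\xi|_{\mathcal{M}}<\infty$ and, for every $N\in\mathbb{N}$, let $\gamma^N=(\gamma^{i,N})_{1\le i\le N}$ be a symmetric (exchangeable) family of random $C^1([0,1],\mathbb{R}^d)$ curves, with empirical current $\xi^N=\frac1N\sum_{i=1}^N\gamma^{i,N}$. Suppose that for every $\theta\in C_b(\mathbb{R}^d,\mathbb{R}^d)$ there is $C$ such that $|\gamma^{i,N}(\theta)|\le C$ $\mathbb{P}$-a.s. uniformly in $i,N$, and that $\lim_{N\to\infty}\mathbb{E}[|\xi^N(\theta)-\xi(\theta)|]=0$. Then for every fixed $r\in\mathbb{N}$ and every $(\theta_1,\dots,\theta_r)\in C_b(\mathbb{R}^d,\mathbb{R}^d)^r$, $$\lim_{N\to\infty}\mathbb{E}\big[(\gamma^{1,N}\otimes\cdots\otimes\gamma^{r,N})(\theta_1,\dots,\theta_r)\big]=\prod_{i=1}^r\xi(\theta_i).$$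
   Context: A current is a continuous linear functional on $C_b(\mathbb{R}^d,\mathbb{R}^d)$ (bounded continuous vector fields with sup norm), with $|\xi|_{\mathcal{M}}=\sup_{\|\theta\|_\infty\le1}|\xi(\theta)|$. A $C^1$ curve $\gamma:[0,1]\to\mathbb{R}^d$ is identified with the current $\gamma(\theta)=\int_0^1\langle\theta(\gamma(\sigma)),\partial_\sigma\gamma(\sigma)\rangle d\sigma$. Tensor product: $(\gamma_1\otimes\cdots\otimes\gamma_r)(\theta_1,\dots,\theta_r)=\prod_i\gamma_i(\theta_i)$. A random curve is a measurable map from a probability space $(\Omega,\mathcal{F},\mathbb{P})$ to $C([0,1];\mathbb{R}^d)$ with its Borel $\sigma$-algebra; a family of random curves is symmetric (exchangeable) if its joint law is invariant under permutations of the indices. *)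

theory Defs
  imports "HOL-Probability.Probability"
begin

text \<open>Vector fields in C_b(R^d,R^d) are elements of the library type of bounded continuous
functions bcontfun, with 'a a Euclidean space (R^d); its norm is the sup norm.\<close>

definition curve_current :: "(real \<Rightarrow> 'a::euclidean_space) \<Rightarrow> ('a \<Rightarrow>\<^sub>C 'a) \<Rightarrow> real" where
  "curve_current \<gamma> \<theta> =
     integral {0..1} (\<lambda>\<sigma>. inner (apply_bcontfun \<theta> (\<gamma> \<sigma>)) (vector_derivative \<gamma> (at \<sigma> within {0..1})))"

definition curve_tensor :: "nat \<Rightarrow> (nat \<Rightarrow> real \<Rightarrow> 'a::euclidean_space) \<Rightarrow> (nat \<Rightarrow> ('a \<Rightarrow>\<^sub>C 'a)) \<Rightarrow> real" where
  "curve_tensor r \<gamma> \<theta> = (\<Prod>i\<in>{1..r}. curve_current (\<gamma> i) (\<theta> i))"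

text \<open>Isometric embedding of C([0,1];R^d) (sup norm) into the bounded continuous functions
on R, by constant extension outside [0,1]. The Borel sigma-algebra of C([0,1];R^d) is the
trace of the Borel sigma-algebra of the target on the image.\<close>
definition curve_as_C :: "(real \<Rightarrow> 'a::euclidean_space) \<Rightarrow> (real \<Rightarrow>\<^sub>C 'a)" where
  "curve_as_C \<gamma> = Bcontfun (\<lambda>t. \<gamma> (max 0 (min 1 t)))"

definition symmetric_family :: "'w measure \<Rightarrow> nat \<Rightarrow> (nat \<Rightarrow> 'w \<Rightarrow> real \<Rightarrow> 'a::euclidean_space) \<Rightarrow> bool" where
  "symmetric_family M N \<gamma> \<longleftrightarrow>
     (\<forall>p. p permutes {1..N} \<longrightarrow>
        distr M (PiM {1..N} (\<lambda>_. borel)) (\<lambda>\<omega>. \<lambda>i\<in>{1..N}. curve_as_C (\<gamma> (p i) \<omega>))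
      = distr M (PiM {1..N} (\<lambda>_. borel)) (\<lambda>\<omega>. \<lambda>i\<in>{1..N}. curve_as_C (\<gamma> i \<omega>)))"

end

theory Submission
  imports Defs
begin


lemma dq: fixes f :: "real \<Rightarrow> 'a::real_normed_vector"
  assumes "(f has_vector_derivative D) (at x)"
  shows "((\<lambda>y. (f y - f x) /\<^sub>R (y - x)) \<longlongrightarrow> D) (at x)"
proof -
  have "((\<lambda>y. ((f y - f x) - (y - x) *\<^sub>R D) /\<^sub>R norm (y - x)) \<longlongrightarrow> 0) (at x)"
    using assms unfolding has_vector_derivative_def has_derivative_at_within by simp
  hence "((\<lambda>y. norm (((f y - f x) - (y - x) *\<^sub>R D) /\<^sub>R norm (y - x))) \<longlongrightarrow> 0) (at x)"
    by (rule tendsto_norm_zero)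
  hence "((\<lambda>y. norm ((f y - f x) /\<^sub>R (y - x) - D)) \<longlongrightarrow> 0) (at x)"
  proof (rule Lim_transform_eventually)
    show "\<forall>\<^sub>F y in at x. norm (((f y - f x) - (y - x) *\<^sub>R D) /\<^sub>R norm (y - x)) = norm ((f y - f x) /\<^sub>R (y - x) - D)"
    proof (rule eventually_at_filter[THEN iffD2], rule always_eventually, intro allI impI)
      fix y assume "y \<noteq> x"
      hence ne: "y - x \<noteq> 0" by simp
      have "(f y - f x) /\<^sub>R (y - x) - D = ((f y - f x) - (y - x) *\<^sub>R D) /\<^sub>R (y - x)"
        using ne by (simp add: scaleR_diff_right)
      thus "norm (((f y - f x) - (y - x) *\<^sub>R D) /\<^sub>R norm (y - x)) = norm ((f y - f x) /\<^sub>R (y - x) - D)"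
        by simp
    qed
  qed
  thus ?thesis
    using tendsto_norm_zero_iff LIM_zero_iff by (metis (no_types) LIM_zero_cancel tendsto_norm_zero_cancel)
qed

lemma curve_as_C_apply:
  fixes \<gamma> :: "real \<Rightarrow> 'a::euclidean_space"
  assumes "continuous_on {0..1} \<gamma>"
  shows "apply_bcontfun (curve_as_C \<gamma>) t = \<gamma> (max 0 (min 1 t))"
proof -
  have c: "continuous_on UNIV (\<lambda>t. \<gamma> (max 0 (min 1 t)))"
    by (rule continuous_on_compose2[OF assms]) (auto intro!: continuous_intros)
  have "range (\<lambda>t. \<gamma> (max 0 (min 1 t))) \<subseteq> \<gamma> ` {0..1}" by auto
  moreover have "bounded (\<gamma> ` {0..1})"
    by (intro compact_imp_bounded compact_continuous_image assms) auto
  ultimately have "bounded (range (\<lambda>t. \<gamma> (max 0 (min 1 t))))" by (rule bounded_subset[rotated])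
  with c have "(\<lambda>t. \<gamma> (max 0 (min 1 t))) \<in> bcontfun" by (simp add: bcontfun_def)
  thus ?thesis unfolding curve_as_C_def by (simp add: Bcontfun_inverse)
qed

lemma eval_cont: "continuous_on UNIV (\<lambda>x::'b::topological_space \<Rightarrow>\<^sub>C 'c::metric_space. apply_bcontfun x t)"
  unfolding continuous_on_iff
  by (metis dist_bounded le_less_trans)

lemma eval_meas[measurable]: "(\<lambda>x::'b::topological_space \<Rightarrow>\<^sub>C 'c::metric_space. apply_bcontfun x t) \<in> borel_measurable borel"
  by (rule borel_measurable_continuous_onI[OF eval_cont])

lemma app_meas[measurable (raw)]:
  fixes \<phi> :: "'a::metric_space \<Rightarrow>\<^sub>C 'c::metric_space"
  assumes [measurable]: "f \<in> borel_measurable M"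
  shows "(\<lambda>x. apply_bcontfun \<phi> (f x)) \<in> borel_measurable M"
  using borel_measurable_continuous_onI[OF continuous_on_apply_bcontfun[of UNIV \<phi>]]
  by (metis measurable_compose assms)


lemma riemann:
  fixes f :: "real \<Rightarrow> real"
  assumes fc: "continuous_on {0..1} f"
  shows "(\<lambda>n. (\<Sum>k<n. f (real k / real n)) / real n) \<longlonglongrightarrow> integral {0..1} f"
proof (rule LIMSEQ_I)
  fix e :: real assume e: "0 < e"
  have "uniformly_continuous_on {0..1} f"
    by (rule compact_uniformly_continuous[OF fc]) auto
  then obtain d where d: "d > 0" and
     dd: "\<And>x x'. x \<in> {0..1} \<Longrightarrow> x' \<in> {0..1} \<Longrightarrow> dist x' x < d \<Longrightarrow> dist (f x') (f x) < e/2"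
    unfolding uniformly_continuous_on_def using e by (metis half_gt_zero)
  obtain N :: nat where N: "1 / d < real N" using reals_Archimedean2 by blast
  have Npos: "0 < real N" using N d by (smt (verit) divide_pos_pos zero_less_one)
  hence N1: "N \<ge> 1" by simp
  have "1 < real N * d" using N d by (simp add: divide_less_eq)
  hence Nd: "1 / real N < d" using Npos by (simp add: divide_less_eq mult.commute)
  show "\<exists>no. \<forall>n\<ge>no. norm ((\<Sum>k<n. f (real k / real n)) / real n - integral {0..1} f) < e"
  proof (intro exI allI impI)
    fix n assume nN: "N \<le> n"
    have npos: "real n > 0" using nN N1 by simp
    have small: "1 / real n < d"
    proof -
      have "1 / real n \<le> 1 / real N" using nN N1 by (simp add: frac_le)
      also have "\<dots> < d" by (rule Nd)
      finally show ?thesis .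
    qed
    have step: "m \<le> n \<Longrightarrow> \<bar>integral {0..real m / real n} f - (\<Sum>k<m. f (real k / real n)) / real n\<bar>
                 \<le> real m * (e/2) / real n" for m
    proof (induction m)
      case 0
      then show ?case by simp
    next
      case (Suc m)
      let ?a = "real m / real n" and ?b = "real (Suc m) / real n"
      have ab: "0 \<le> ?a" "?a \<le> ?b" "?b \<le> 1" using Suc.prems npos
        by (auto simp: divide_simps)
      have sub: "{?a..?b} \<subseteq> {0..1}" using ab(1) ab(3)
        by (intro subsetI) (meson atLeastAtMost_iff order_trans)
      have ba: "?b - ?a = 1 / real n" using npos by (simp add: divide_simps)
      have int: "f integrable_on {0..?b}"
        by (rule integrable_continuous_interval, rule continuous_on_subset[OF fc]) (use ab in auto)
      have comb: "integral {0..?a} f + integral {?a..?b} f = integral {0..?b} f"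
        using ab int by (intro Henstock_Kurzweil_Integration.integral_combine) auto
      have c2: "continuous_on {?a..?b} (\<lambda>t. f t - f ?a)"
        by (intro continuous_intros continuous_on_subset[OF fc]) (use ab in auto)
      have "norm (integral {?a..?b} (\<lambda>t. f t - f ?a)) \<le> (e/2) * (?b - ?a)"
      proof (rule integral_bound[OF ab(2) c2])
        fix t assume t: "t \<in> {?a..?b}"
        have "dist t ?a < d" using t ba small by (auto simp: dist_real_def)
        have "0 \<le> t" "t \<le> 1" using t ab(1) ab(3) by (meson atLeastAtMost_iff order_trans)+
        hence "t \<in> {0..1}" by simp
        hence "dist (f t) (f ?a) < e/2" using \<open>dist t ?a < d\<close> ab by (intro dd) auto
        thus "norm (f t - f ?a) \<le> e/2" by (simp add: dist_norm)
      qed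
      moreover have "integral {?a..?b} (\<lambda>t. f t - f ?a) = integral {?a..?b} f - f ?a / real n"
      proof -
        have i1: "f integrable_on {?a..?b}" by (rule integrable_continuous_interval[OF continuous_on_subset[OF fc sub]])
        have "integral {?a..?b} (\<lambda>t. f t - f ?a) = integral {?a..?b} f - integral {?a..?b} (\<lambda>t. f ?a)"
          by (rule integral_diff[OF i1]) (rule integrable_const_ivl)
        also have "integral {?a..?b} (\<lambda>t. f ?a) = (?b - ?a) * f ?a" using ab(2) by simp
        finally show ?thesis using ba by simp
      qed
      ultimately have piece: "\<bar>integral {?a..?b} f - f ?a / real n\<bar> \<le> (e/2) / real n"
        using ba by simp
      have "(\<Sum>k<Suc m. f (real k / real n)) / real n = (\<Sum>k<m. f (real k / real n)) / real n + f ?a / real n"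
        by (simp add: add_divide_distrib)
      hence "\<bar>integral {0..?b} f - (\<Sum>k<Suc m. f (real k / real n)) / real n\<bar>
          \<le> \<bar>integral {0..?a} f - (\<Sum>k<m. f (real k / real n)) / real n\<bar> + \<bar>integral {?a..?b} f - f ?a / real n\<bar>"
        using comb by linarith
      also have "\<dots> \<le> real m * (e/2) / real n + (e/2) / real n"
        using Suc.IH Suc.prems piece by simp
      also have "\<dots> = real (Suc m) * (e/2) / real n" by (simp add: divide_simps algebra_simps)
      finally show ?case .
    qed
    from step[of n] npos have "\<bar>integral {0..1} f - (\<Sum>k<n. f (real k / real n)) / real n\<bar> \<le> e/2"
      by simp
    thus "norm ((\<Sum>k<n. f (real k / real n)) / real n - integral {0..1} f) < e" using e by (simp add: abs_minus_commute)
  qed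
qed

definition Dq :: "('a::euclidean_space \<Rightarrow>\<^sub>C 'a) \<Rightarrow> nat \<Rightarrow> real \<Rightarrow> (real \<Rightarrow>\<^sub>C 'a) \<Rightarrow> real" where
  "Dq \<phi> m \<sigma> x = inner (apply_bcontfun \<phi> (apply_bcontfun x \<sigma>))
      (real m *\<^sub>R (apply_bcontfun x (\<sigma> + 1 / real m) - apply_bcontfun x \<sigma>))"

definition hq :: "('a::euclidean_space \<Rightarrow>\<^sub>C 'a) \<Rightarrow> real \<Rightarrow> (real \<Rightarrow>\<^sub>C 'a) \<Rightarrow> real" where
  "hq \<phi> \<sigma> x = lim (\<lambda>m. Dq \<phi> m \<sigma> x)"

definition Sq :: "('a::euclidean_space \<Rightarrow>\<^sub>C 'a) \<Rightarrow> nat \<Rightarrow> (real \<Rightarrow>\<^sub>C 'a) \<Rightarrow> real" where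
  "Sq \<phi> n x = (\<Sum>k<n. hq \<phi> (real k / real n) x) / real n"

definition Gq :: "('a::euclidean_space \<Rightarrow>\<^sub>C 'a) \<Rightarrow> (real \<Rightarrow>\<^sub>C 'a) \<Rightarrow> real" where
  "Gq \<phi> x = lim (\<lambda>n. Sq \<phi> n x)"

lemma Gq_meas[measurable]: "Gq \<phi> \<in> borel_measurable borel"
proof -
  have [measurable]: "(\<lambda>x. Dq \<phi> m \<sigma> x) \<in> borel_measurable borel" for m \<sigma>
    unfolding Dq_def by measurable
  have [measurable]: "(\<lambda>x. hq \<phi> \<sigma> x) \<in> borel_measurable borel" for \<sigma>
    unfolding hq_def by measurable
  have [measurable]: "(\<lambda>x. Sq \<phi> n x) \<in> borel_measurable borel" for n
    unfolding Sq_def by measurable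
  show ?thesis unfolding Gq_def by measurable
qed

lemma hq_lim:
  fixes \<gamma> :: "real \<Rightarrow> 'a::euclidean_space"
  assumes der: "(\<gamma> has_vector_derivative D) (at \<sigma>)" and cont: "continuous_on {0..1} \<gamma>"
    and s0: "0 \<le> \<sigma>" and s1: "\<sigma> < 1"
  shows "(\<lambda>m. Dq \<phi> m \<sigma> (curve_as_C \<gamma>)) \<longlonglongrightarrow> inner (apply_bcontfun \<phi> (\<gamma> \<sigma>)) D"
proof -
  have lim1: "((\<lambda>y. (\<gamma> y - \<gamma> \<sigma>) /\<^sub>R (y - \<sigma>)) \<longlongrightarrow> D) (at \<sigma>)" by (rule dq[OF der])
  have fl: "filterlim (\<lambda>m::nat. \<sigma> + 1 / real m) (at \<sigma>) sequentially"
  proof (subst filterlim_at, intro conjI)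
    show "\<forall>\<^sub>F m in sequentially. \<sigma> + 1 / real m \<in> UNIV \<and> \<sigma> + 1 / real m \<noteq> \<sigma>"
      using eventually_gt_at_top[of 0] by eventually_elim simp
    have "(\<lambda>m. \<sigma> + 1 / real m) \<longlonglongrightarrow> \<sigma> + 0"
      by (intro tendsto_add tendsto_const lim_1_over_n)
    thus "(\<lambda>m. \<sigma> + 1 / real m) \<longlonglongrightarrow> \<sigma>" by simp
  qed
  have "(\<lambda>m. (\<gamma> (\<sigma> + 1 / real m) - \<gamma> \<sigma>) /\<^sub>R ((\<sigma> + 1 / real m) - \<sigma>)) \<longlonglongrightarrow> D"
    using filterlim_compose[OF lim1 fl] by (simp add: o_def)
  hence lim2: "(\<lambda>m. inner (apply_bcontfun \<phi> (\<gamma> \<sigma>)) ((\<gamma> (\<sigma> + 1 / real m) - \<gamma> \<sigma>) /\<^sub>R ((\<sigma> + 1 / real m) - \<sigma>)))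
      \<longlonglongrightarrow> inner (apply_bcontfun \<phi> (\<gamma> \<sigma>)) D"
    by (intro tendsto_inner tendsto_const)
  obtain M :: nat where M: "1 / (1 - \<sigma>) < real M" using reals_Archimedean2 by blast
  have Mpos: "0 < real M" using M s1 by (smt (verit) divide_pos_pos)
  have "1 < real M * (1 - \<sigma>)" using M s1 by (simp add: divide_less_eq)
  hence M1: "1 / real M < 1 - \<sigma>" using Mpos by (simp add: divide_less_eq mult.commute)
  show ?thesis
  proof (rule Lim_transform_eventually[OF lim2], rule eventually_sequentiallyI[of M])
    fix m assume mM: "M \<le> m"
    have mpos: "0 < real m" using mM Mpos by linarith
    have "1 / real m \<le> 1 / real M" using mM Mpos by (simp add: frac_le)
    hence le1: "\<sigma> + 1 / real m \<le> 1" using M1 by linarith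
    have pos: "0 \<le> \<sigma> + 1 / real m" using s0 mpos by simp
    have e1: "apply_bcontfun (curve_as_C \<gamma>) \<sigma> = \<gamma> \<sigma>"
      using curve_as_C_apply[OF cont] s0 s1 by simp
    have e2: "apply_bcontfun (curve_as_C \<gamma>) (\<sigma> + 1 / real m) = \<gamma> (\<sigma> + 1 / real m)"
      using curve_as_C_apply[OF cont] le1 pos by simp
    show "inner (apply_bcontfun \<phi> (\<gamma> \<sigma>)) ((\<gamma> (\<sigma> + 1 / real m) - \<gamma> \<sigma>) /\<^sub>R ((\<sigma> + 1 / real m) - \<sigma>))
        = Dq \<phi> m \<sigma> (curve_as_C \<gamma>)"
      unfolding Dq_def e1 e2 by simp
  qed
qed

lemma Gq_eq:
  fixes \<gamma> :: "real \<Rightarrow> 'a::euclidean_space"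
  assumes "\<gamma> C1_differentiable_on {0..1}"
  shows "Gq \<phi> (curve_as_C \<gamma>) = curve_current \<gamma> \<phi>"
proof -
  obtain D where D: "\<And>x. x \<in> {0..1} \<Longrightarrow> (\<gamma> has_vector_derivative D x) (at x)"
    and Dc: "continuous_on {0..1} D"
    using assms unfolding C1_differentiable_on_def by blast
  have cont: "continuous_on {0..1} \<gamma>"
    using D by (meson continuous_at_imp_continuous_on has_vector_derivative_continuous)
  define h where "h \<sigma> = inner (apply_bcontfun \<phi> (\<gamma> \<sigma>)) (D \<sigma>)" for \<sigma>
  have hc: "continuous_on {0..1} h"
    unfolding h_def
    by (intro continuous_intros Dc continuous_on_compose2[OF continuous_on_apply_bcontfun cont]) auto
  have hq: "hq \<phi> \<sigma> (curve_as_C \<gamma>) = h \<sigma>" if "0 \<le> \<sigma>" "\<sigma> < 1" for \<sigma>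
    unfolding hq_def h_def using hq_lim[OF D cont that] that by (simp add: limI)
  have Sq: "Sq \<phi> n (curve_as_C \<gamma>) = (\<Sum>k<n. h (real k / real n)) / real n" for n
    unfolding Sq_def by (intro arg_cong2[where f="(/)"] sum.cong refl hq) auto
  have cc: "curve_current \<gamma> \<phi> = integral {0..1} h"
    unfolding curve_current_def h_def
    by (intro integral_cong arg_cong2[where f=inner] refl vector_derivative_at_within_ivl D) auto
  show ?thesis unfolding Gq_def Sq cc using riemann[OF hc] by (simp add: limI)
qed



lemma perm_ext:
  assumes AB: "A \<subseteq> B" and fB: "finite B" and inj: "inj_on j A" and jA: "j ` A \<subseteq> B"
  obtains p where "p permutes B" "\<And>k. k \<in> A \<Longrightarrow> p k = j k"
proof -
  have fA: "finite A" using AB fB finite_subset by blast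
  have c1: "card (j ` A) = card A" using inj by (rule card_image)
  have c2: "card (B - A) = card B - card A" using card_Diff_subset[OF fA AB] .
  have c3: "card (B - j ` A) = card B - card (j ` A)" using card_Diff_subset[OF finite_imageI[OF fA] jA] .
  have "card (B - A) = card (B - j ` A)" unfolding c2 c3 c1 ..
  hence "\<exists>h. bij_betw h (B - A) (B - j ` A)"
    by (intro finite_same_card_bij finite_Diff fB)
  then obtain g where g: "bij_betw g (B - A) (B - j ` A)" by (elim exE)
  define p where "p k = (if k \<in> A then j k else if k \<in> B then g k else k)" for k
  have b1: "bij_betw p A (j ` A)"
    using inj_on_imp_bij_betw[OF inj] by (rule bij_betw_cong[THEN iffD1, rotated]) (simp add: p_def)
  have b2: "bij_betw p (B - A) (B - j ` A)"
    using g by (rule bij_betw_cong[THEN iffD1, rotated]) (simp add: p_def)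
  have "bij_betw p (A \<union> (B - A)) (j ` A \<union> (B - j ` A))"
    by (rule bij_betw_combine[OF b1 b2]) auto
  moreover have "A \<union> (B - A) = B" "j ` A \<union> (B - j ` A) = B" using AB jA by auto
  ultimately have "bij_betw p B B" by simp
  hence "p permutes B" by (rule bij_imp_permutes) (use AB in \<open>auto simp: p_def\<close>)
  thus ?thesis using that by (simp add: p_def)
qed

lemma prod_abs_le:
  fixes f :: "'i \<Rightarrow> real"
  assumes "\<And>k. k \<in> S \<Longrightarrow> \<bar>f k\<bar> \<le> L" "0 \<le> L"
  shows "\<bar>\<Prod>k\<in>S. f k\<bar> \<le> L ^ card S"
  using assms
proof (induct S rule: infinite_finite_induct)
  case (insert x F)
  have "\<bar>\<Prod>k\<in>insert x F. f k\<bar> = \<bar>f x\<bar> * \<bar>\<Prod>k\<in>F. f k\<bar>" using insert by (simp add: abs_mult)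
  also have "\<dots> \<le> L * L ^ card F"
    using insert by (intro mult_mono) auto
  finally show ?case using insert by simp
qed auto

lemma prod_diff_le:
  fixes a b :: "'i \<Rightarrow> real"
  assumes "finite S" "\<And>k. k \<in> S \<Longrightarrow> \<bar>a k\<bar> \<le> L" "\<And>k. k \<in> S \<Longrightarrow> \<bar>b k\<bar> \<le> L" "1 \<le> L"
  shows "\<bar>(\<Prod>k\<in>S. a k) - (\<Prod>k\<in>S. b k)\<bar> \<le> L ^ card S * (\<Sum>k\<in>S. \<bar>a k - b k\<bar>)"
  using assms
proof (induct S rule: finite_induct)
  case (insert x F)
  let ?A = "\<Prod>k\<in>F. a k" and ?B = "\<Prod>k\<in>F. b k" and ?s = "\<Sum>k\<in>F. \<bar>a k - b k\<bar>"
  have IH: "\<bar>?A - ?B\<bar> \<le> L ^ card F * ?s" using insert by auto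
  have Bb: "\<bar>?B\<bar> \<le> L ^ card F" using insert by (intro prod_abs_le) auto
  have ax: "\<bar>a x\<bar> \<le> L" using insert by auto
  have s0: "0 \<le> ?s" by (simp add: sum_nonneg)
  have "(\<Prod>k\<in>insert x F. a k) - (\<Prod>k\<in>insert x F. b k) = a x * (?A - ?B) + (a x - b x) * ?B"
    using insert by (simp add: algebra_simps)
  hence "\<bar>(\<Prod>k\<in>insert x F. a k) - (\<Prod>k\<in>insert x F. b k)\<bar> = \<bar>a x * (?A - ?B) + (a x - b x) * ?B\<bar>"
    by simp
  also have "\<dots> \<le> \<bar>a x * (?A - ?B)\<bar> + \<bar>(a x - b x) * ?B\<bar>" by (rule abs_triangle_ineq)
  also have "\<dots> = \<bar>a x\<bar> * \<bar>?A - ?B\<bar> + \<bar>a x - b x\<bar> * \<bar>?B\<bar>" by (simp add: abs_mult)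
  also have "\<dots> \<le> L * (L ^ card F * ?s) + \<bar>a x - b x\<bar> * L ^ card F"
    using insert(6) by (intro add_mono mult_mono IH ax Bb) auto
  also have "\<dots> \<le> L ^ Suc (card F) * ?s + \<bar>a x - b x\<bar> * L ^ Suc (card F)"
  proof -
    have "L ^ card F \<le> L ^ Suc (card F)" using insert by (intro power_increasing) auto
    thus ?thesis by (intro add_mono mult_left_mono) (auto simp: s0)
  qed
  also have "\<dots> = L ^ card (insert x F) * (\<Sum>k\<in>insert x F. \<bar>a k - b k\<bar>)"
    using insert by (simp add: algebra_simps)
  finally show ?case .
qed simp


theorem theorem6p4:
  fixes M :: "'w measure"
    and \<xi> :: "('a::euclidean_space \<Rightarrow>\<^sub>C 'a) \<Rightarrow> real"
    and \<gamma> :: "nat \<Rightarrow> nat \<Rightarrow> 'w \<Rightarrow> real \<Rightarrow> 'a"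
    and r :: nat
    and \<theta> :: "nat \<Rightarrow> ('a \<Rightarrow>\<^sub>C 'a)"
  assumes "prob_space M"
    and "bounded_linear \<xi>"
    and C1: "\<And>N i \<omega>. i \<in> {1..N} \<Longrightarrow> \<omega> \<in> space M \<Longrightarrow> \<gamma> N i \<omega> C1_differentiable_on {0..1}"
    and meas: "\<And>N i. i \<in> {1..N} \<Longrightarrow> (\<lambda>\<omega>. curve_as_C (\<gamma> N i \<omega>)) \<in> M \<rightarrow>\<^sub>M borel"
    and sym: "\<And>N. symmetric_family M N (\<gamma> N)"
    and bdd: "\<And>\<phi>. \<exists>C. \<forall>N i. i \<in> {1..N} \<longrightarrow>
                (AE \<omega> in M. \<bar>curve_current (\<gamma> N i \<omega>) \<phi>\<bar> \<le> C)"
    and conv: "\<And>\<phi>. (\<lambda>N. integral\<^sup>L M (\<lambda>\<omega>.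
                 \<bar>(\<Sum>i\<in>{1..N}. curve_current (\<gamma> N i \<omega>) \<phi>) / real N - \<xi> \<phi>\<bar>))
               \<longlonglongrightarrow> 0"
  shows "(\<lambda>N. integral\<^sup>L M (\<lambda>\<omega>. curve_tensor r (\<lambda>i. \<gamma> N i \<omega>) \<theta>))
           \<longlonglongrightarrow> (\<Prod>i\<in>{1..r}. \<xi> (\<theta> i))"
proof -
  interpret P: prob_space M by fact
  have ccG: "curve_current (\<gamma> N i \<omega>) \<phi> = Gq \<phi> (curve_as_C (\<gamma> N i \<omega>))"
    if "\<omega> \<in> space M" "i \<in> {1..N}" for \<omega> i N \<phi>
    using Gq_eq[OF C1[OF that(2,1)]] by simp
  have cm: "(\<lambda>\<omega>. curve_current (\<gamma> N i \<omega>) \<phi>) \<in> borel_measurable M" if "i \<in> {1..N}" for N i \<phi>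
  proof -
    have "(\<lambda>\<omega>. Gq \<phi> (curve_as_C (\<gamma> N i \<omega>))) \<in> borel_measurable M"
      using measurable_compose[OF meas[OF that] Gq_meas] .
    thus ?thesis by (subst measurable_cong[where g="\<lambda>\<omega>. Gq \<phi> (curve_as_C (\<gamma> N i \<omega>))"]) (use ccG that in auto)
  qed
  have "\<forall>\<phi>. \<exists>C. \<forall>N i. i \<in> {1..N} \<longrightarrow> (AE \<omega> in M. \<bar>curve_current (\<gamma> N i \<omega>) \<phi>\<bar> \<le> C)"
    using bdd by blast
  then obtain C where C: "\<And>\<phi> N i. i \<in> {1..N} \<Longrightarrow> (AE \<omega> in M. \<bar>curve_current (\<gamma> N i \<omega>) \<phi>\<bar> \<le> C \<phi>)"
    by metis
  define L where "L = 1 + (\<Sum>k\<in>{1..r}. \<bar>C (\<theta> k)\<bar> + \<bar>\<xi> (\<theta> k)\<bar>)"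
  have L1: "1 \<le> L" unfolding L_def by (simp add: sum_nonneg)
  have L0: "0 \<le> L" using L1 by simp
  have kL: "\<bar>C (\<theta> k)\<bar> + \<bar>\<xi> (\<theta> k)\<bar> \<le> L" if "k \<in> {1..r}" for k
  proof -
    have "\<bar>C (\<theta> k)\<bar> + \<bar>\<xi> (\<theta> k)\<bar> \<le> (\<Sum>k\<in>{1..r}. \<bar>C (\<theta> k)\<bar> + \<bar>\<xi> (\<theta> k)\<bar>)"
      by (rule member_le_sum) (use that in auto)
    thus ?thesis unfolding L_def by simp
  qed
  have CL: "C (\<theta> k) \<le> L" and xL: "\<bar>\<xi> (\<theta> k)\<bar> \<le> L" if "k \<in> {1..r}" for k
    using kL[OF that] by auto
  have AEb: "AE \<omega> in M. \<forall>k\<in>{1..r}. \<forall>i\<in>{1..N}. \<bar>curve_current (\<gamma> N i \<omega>) (\<theta> k)\<bar> \<le> L" for N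
  proof (intro AE_finite_allI finite_atLeastAtMost)
    fix k i assume k: "k \<in> {1..r}" and i: "i \<in> {1..N}"
    show "AE \<omega> in M. \<bar>curve_current (\<gamma> N i \<omega>) (\<theta> k)\<bar> \<le> L"
      using C[OF i, of "\<theta> k"] by (rule eventually_mono) (use CL[OF k] in simp)
  qed
  define Y where "Y N k \<omega> = (\<Sum>i\<in>{1..N}. curve_current (\<gamma> N i \<omega>) (\<theta> k)) / real N" for N k \<omega>
  have Ym: "(\<lambda>\<omega>. Y N k \<omega>) \<in> borel_measurable M" for N k
    unfolding Y_def by (intro borel_measurable_divide borel_measurable_sum cm measurable_const) auto
  have Yb: "AE \<omega> in M. \<forall>k\<in>{1..r}. \<bar>Y N k \<omega>\<bar> \<le> L" for N
    using AEb[of N]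
  proof eventually_elim
    case (elim \<omega>)
    show ?case
    proof
      fix k assume k: "k \<in> {1..r}"
      show "\<bar>Y N k \<omega>\<bar> \<le> L"
      proof (cases "N = 0")
        case True thus ?thesis using L0 by (simp add: Y_def)
      next
        case False
        have "\<bar>\<Sum>i\<in>{1..N}. curve_current (\<gamma> N i \<omega>) (\<theta> k)\<bar> \<le> (\<Sum>i\<in>{1..N}. \<bar>curve_current (\<gamma> N i \<omega>) (\<theta> k)\<bar>)"
          by (rule sum_abs)
        also have "\<dots> \<le> real (card {1..N}) * L"
          by (rule sum_bounded_above) (use elim k in auto)
        finally have "\<bar>\<Sum>i\<in>{1..N}. curve_current (\<gamma> N i \<omega>) (\<theta> k)\<bar> \<le> real N * L" by simp
        thus ?thesis using False by (simp add: Y_def divide_le_eq mult.commute)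
      qed
    qed
  qed
  have Yint: "integrable M (\<lambda>\<omega>. Y N k \<omega>)" if "k \<in> {1..r}" for N k
    by (rule P.integrable_const_bound[where B=L]) (use Yb[of N] that Ym in \<open>auto elim: AE_mp\<close>)
  define PY where "PY N \<omega> = (\<Prod>k\<in>{1..r}. Y N k \<omega>)" for N \<omega>
  have PYm: "(\<lambda>\<omega>. PY N \<omega>) \<in> borel_measurable M" for N
    unfolding PY_def by (intro borel_measurable_prod Ym)
  have PYint: "integrable M (PY N)" for N
  proof (rule P.integrable_const_bound[where B="L ^ r"])
    show "AE \<omega> in M. norm (PY N \<omega>) \<le> L ^ r"
      using Yb[of N] by eventually_elim (use L0 in \<open>auto simp: PY_def intro!: prod_abs_le[where L=L, of "{1..r}", simplified]\<close>)
  qed (use PYm in simp)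
  have A: "(\<lambda>N. integral\<^sup>L M (PY N)) \<longlonglongrightarrow> (\<Prod>k\<in>{1..r}. \<xi> (\<theta> k))"
  proof -
    define g where "g N = L ^ r * (\<Sum>k\<in>{1..r}. integral\<^sup>L M (\<lambda>\<omega>. \<bar>Y N k \<omega> - \<xi> (\<theta> k)\<bar>))" for N
    have g0: "g \<longlonglongrightarrow> 0"
    proof -
      have "g \<longlonglongrightarrow> L ^ r * (\<Sum>k\<in>{1..r}. 0)"
        unfolding g_def Y_def by (intro tendsto_mult tendsto_const tendsto_sum conv)
      thus ?thesis by simp
    qed
    have "(\<lambda>N. integral\<^sup>L M (PY N) - (\<Prod>k\<in>{1..r}. \<xi> (\<theta> k))) \<longlonglongrightarrow> 0"
    proof (rule Lim_null_comparison[OF always_eventually[OF allI] g0])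
      fix N
      have di: "integrable M (\<lambda>\<omega>. \<bar>Y N k \<omega> - \<xi> (\<theta> k)\<bar>)" if "k \<in> {1..r}" for k
        by (intro integrable_abs Bochner_Integration.integrable_diff Yint[OF that, of N] P.integrable_const)
      have "integral\<^sup>L M (PY N) - (\<Prod>k\<in>{1..r}. \<xi> (\<theta> k)) = integral\<^sup>L M (\<lambda>\<omega>. PY N \<omega> - (\<Prod>k\<in>{1..r}. \<xi> (\<theta> k)))"
        using PYint by (subst Bochner_Integration.integral_diff) (auto intro: P.integrable_const simp: P.prob_space)
      also have "\<bar>\<dots>\<bar> \<le> integral\<^sup>L M (\<lambda>\<omega>. \<bar>PY N \<omega> - (\<Prod>k\<in>{1..r}. \<xi> (\<theta> k))\<bar>)"
        by (rule integral_abs_bound)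
      also have "\<dots> \<le> integral\<^sup>L M (\<lambda>\<omega>. L ^ r * (\<Sum>k\<in>{1..r}. \<bar>Y N k \<omega> - \<xi> (\<theta> k)\<bar>))"
      proof (rule integral_mono_AE)
        show "integrable M (\<lambda>\<omega>. \<bar>PY N \<omega> - (\<Prod>k\<in>{1..r}. \<xi> (\<theta> k))\<bar>)"
          using PYint by (intro integrable_abs Bochner_Integration.integrable_diff P.integrable_const)
        show "integrable M (\<lambda>\<omega>. L ^ r * (\<Sum>k\<in>{1..r}. \<bar>Y N k \<omega> - \<xi> (\<theta> k)\<bar>))"
          using di by (intro integrable_mult_right Bochner_Integration.integrable_sum) auto
        show "AE \<omega> in M. \<bar>PY N \<omega> - (\<Prod>k\<in>{1..r}. \<xi> (\<theta> k))\<bar> \<le> L ^ r * (\<Sum>k\<in>{1..r}. \<bar>Y N k \<omega> - \<xi> (\<theta> k)\<bar>)"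
          using Yb[of N]
        proof eventually_elim
          case (elim \<omega>)
          show ?case unfolding PY_def
            using prod_diff_le[of "{1..r}" "\<lambda>k. Y N k \<omega>" L "\<lambda>k. \<xi> (\<theta> k)"] elim xL L1 by simp
        qed
      qed
      also have "\<dots> = g N"
        unfolding g_def using di by (subst integral_mult_right_zero, subst Bochner_Integration.integral_sum) auto
      finally show "norm (integral\<^sup>L M (PY N) - (\<Prod>k\<in>{1..r}. \<xi> (\<theta> k))) \<le> g N" by simp
    qed
    thus ?thesis by (simp add: LIM_zero_iff)
  qed
  define E where "E N j = integral\<^sup>L M (\<lambda>\<omega>. \<Prod>k\<in>{1..r}. curve_current (\<gamma> N (j k) \<omega>) (\<theta> k))" for N j
  define E0 where "E0 N = integral\<^sup>L M (\<lambda>\<omega>. \<Prod>k\<in>{1..r}. curve_current (\<gamma> N k \<omega>) (\<theta> k))" for N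
  define PP where "PP N = PiE {1..r} (\<lambda>_. {1..N::nat})" for N
  have Eint: "integrable M (\<lambda>\<omega>. \<Prod>k\<in>{1..r}. curve_current (\<gamma> N (j k) \<omega>) (\<theta> k))"
    and Eb: "\<bar>E N j\<bar> \<le> L ^ r"
    if j: "\<And>k. k \<in> {1..r} \<Longrightarrow> j k \<in> {1..N}" for N j
  proof -
    have m: "(\<lambda>\<omega>. \<Prod>k\<in>{1..r}. curve_current (\<gamma> N (j k) \<omega>) (\<theta> k)) \<in> borel_measurable M"
      by (intro borel_measurable_prod cm j)
    have ae: "AE \<omega> in M. \<bar>\<Prod>k\<in>{1..r}. curve_current (\<gamma> N (j k) \<omega>) (\<theta> k)\<bar> \<le> L ^ r"
      using AEb[of N] by eventually_elim (use j L0 in \<open>auto intro!: prod_abs_le[where L=L, of "{1..r}", simplified]\<close>)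
    show i: "integrable M (\<lambda>\<omega>. \<Prod>k\<in>{1..r}. curve_current (\<gamma> N (j k) \<omega>) (\<theta> k))"
      by (rule P.integrable_const_bound[where B="L ^ r"]) (use ae m in auto)
    have "\<bar>E N j\<bar> \<le> integral\<^sup>L M (\<lambda>\<omega>. \<bar>\<Prod>k\<in>{1..r}. curve_current (\<gamma> N (j k) \<omega>) (\<theta> k)\<bar>)"
      unfolding E_def by (rule integral_abs_bound)
    also have "\<dots> \<le> integral\<^sup>L M (\<lambda>_. L ^ r)"
      by (rule integral_mono_AE) (use i ae in \<open>auto intro: P.integrable_const\<close>)
    finally show "\<bar>E N j\<bar> \<le> L ^ r" by (simp add: P.prob_space)
  qed
  have E0E: "E0 N = E N (\<lambda>k. k)" for N unfolding E0_def E_def by simp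
  have symE: "E N j = E0 N" if rN: "r \<le> N" and jP: "j \<in> PP N" and ij: "inj_on j {1..r}" for N j
  proof -
    have jk: "j k \<in> {1..N}" if "k \<in> {1..r}" for k using jP that by (auto simp: PP_def)
    obtain p where p: "p permutes {1..N}" and pj: "\<And>k. k \<in> {1..r} \<Longrightarrow> p k = j k"
      by (rule perm_ext[of "{1..r}" "{1..N}" j]) (use rN ij jk in auto)
    have D: "distr M (PiM {1..N} (\<lambda>_. borel)) (\<lambda>\<omega>. \<lambda>i\<in>{1..N}. curve_as_C (\<gamma> N (p i) \<omega>))
      = distr M (PiM {1..N} (\<lambda>_. borel)) (\<lambda>\<omega>. \<lambda>i\<in>{1..N}. curve_as_C (\<gamma> N i \<omega>))"
      using sym[of N] p unfolding symmetric_family_def by blast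
    define F where "F x = (\<Prod>k\<in>{1..r}. Gq (\<theta> k) (x k))" for x :: "nat \<Rightarrow> real \<Rightarrow>\<^sub>C 'a"
    have kN: "k \<in> {1..N}" if "k \<in> {1..r}" for k using that rN by auto
    have Fm: "F \<in> borel_measurable (PiM {1..N} (\<lambda>_. borel))"
      unfolding F_def
    proof (rule borel_measurable_prod)
      fix k assume k: "k \<in> {1..r}"
      have "(\<lambda>x. x k) \<in> PiM {1..N} (\<lambda>_. borel) \<rightarrow>\<^sub>M (borel :: (real \<Rightarrow>\<^sub>C 'a) measure)"
        using measurable_component_singleton[of k "{1..N}" "\<lambda>_. borel"] kN[OF k] by simp
      from measurable_compose[OF this Gq_meas]
      show "(\<lambda>x. Gq (\<theta> k) (x k)) \<in> borel_measurable (PiM {1..N} (\<lambda>_. borel))" .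
    qed
    have pin: "p i \<in> {1..N}" if "i \<in> {1..N}" for i using permutes_in_image[OF p] that by simp
    have Xp: "(\<lambda>\<omega>. \<lambda>i\<in>{1..N}. curve_as_C (\<gamma> N (p i) \<omega>)) \<in> measurable M (PiM {1..N} (\<lambda>_. borel))"
      by (intro measurable_restrict meas pin)
    have X: "(\<lambda>\<omega>. \<lambda>i\<in>{1..N}. curve_as_C (\<gamma> N i \<omega>)) \<in> measurable M (PiM {1..N} (\<lambda>_. borel))"
      by (intro measurable_restrict meas)
    have "E N j = integral\<^sup>L M (\<lambda>\<omega>. F (\<lambda>i\<in>{1..N}. curve_as_C (\<gamma> N (p i) \<omega>)))"
      unfolding E_def F_def
      by (intro Bochner_Integration.integral_cong refl prod.cong) (use kN pj jk in \<open>auto simp: ccG\<close>)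
    also have "\<dots> = integral\<^sup>L (distr M (PiM {1..N} (\<lambda>_. borel)) (\<lambda>\<omega>. \<lambda>i\<in>{1..N}. curve_as_C (\<gamma> N (p i) \<omega>))) F"
      by (rule integral_distr[OF Xp Fm, symmetric])
    also have "\<dots> = integral\<^sup>L (distr M (PiM {1..N} (\<lambda>_. borel)) (\<lambda>\<omega>. \<lambda>i\<in>{1..N}. curve_as_C (\<gamma> N i \<omega>))) F"
      by (simp only: D)
    also have "\<dots> = integral\<^sup>L M (\<lambda>\<omega>. F (\<lambda>i\<in>{1..N}. curve_as_C (\<gamma> N i \<omega>)))"
      by (rule integral_distr[OF X Fm])
    also have "\<dots> = E0 N"
      unfolding E0_def F_def
      by (intro Bochner_Integration.integral_cong refl prod.cong) (use kN in \<open>auto simp: ccG\<close>)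
    finally show ?thesis .
  qed
  define I where "I N = {j \<in> PP N. inj_on j {1..r}}" for N
  have finPi: "finite (PP N)" for N unfolding PP_def by (simp add: finite_PiE)
  have cardPi: "card (PP N) = N ^ r" for N unfolding PP_def by (simp add: card_PiE)
  have cardI: "card (I N) = (\<Prod>i\<in>{0..<r}. N - i)" for N
    using card_inj_on_subset_funcset[of "{1..r}" "{1..N}" "{1..r}"]
    unfolding I_def PP_def by simp
  have IPi: "I N \<subseteq> PP N" for N unfolding I_def by auto
  have B: "\<bar>integral\<^sup>L M (PY N) - E0 N\<bar> \<le> 2 * L ^ r * (1 - real (card (I N)) / real N ^ r)"
    if rN: "r \<le> N" and N1: "1 \<le> N" for N
  proof -
    have Npos: "real N ^ r > 0" using N1 by simp
    have jk: "j k \<in> {1..N}" if "j \<in> PP N" "k \<in> {1..r}" for j k using that by (auto simp: PP_def)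
    have PYe: "PY N \<omega> = (\<Sum>j\<in>PP N. \<Prod>k\<in>{1..r}. curve_current (\<gamma> N (j k) \<omega>) (\<theta> k)) / real N ^ r" for \<omega>
    proof -
      have "PY N \<omega> = (\<Prod>k\<in>{1..r}. \<Sum>i\<in>{1..N}. curve_current (\<gamma> N i \<omega>) (\<theta> k)) / (\<Prod>k\<in>{1..r}. real N)"
        unfolding PY_def Y_def by (rule prod_dividef)
      also have "\<dots> = (\<Sum>j\<in>PP N. \<Prod>k\<in>{1..r}. curve_current (\<gamma> N (j k) \<omega>) (\<theta> k)) / real N ^ r"
        unfolding PP_def by (subst prod_sum_PiE) auto
      finally show ?thesis .
    qed
    have iPY: "integral\<^sup>L M (PY N) = (\<Sum>j\<in>PP N. E N j) / real N ^ r"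
    proof -
      have ints: "\<And>j. j \<in> PP N \<Longrightarrow> integrable M (\<lambda>\<omega>. \<Prod>k\<in>{1..r}. curve_current (\<gamma> N (j k) \<omega>) (\<theta> k))"
        using Eint jk by blast
      show ?thesis
        unfolding PYe E_def by (simp only: integral_divide_zero Bochner_Integration.integral_sum[OF ints])
    qed
    have s1: "(\<Sum>j\<in>PP N. E N j - E0 N) = (\<Sum>j\<in>PP N. E N j) - real N ^ r * E0 N"
      by (simp add: sum_subtractf cardPi)
    have "integral\<^sup>L M (PY N) - E0 N = (\<Sum>j\<in>PP N. E N j - E0 N) / real N ^ r"
      unfolding s1 iPY using Npos by (simp add: diff_divide_distrib)
    also have "(\<Sum>j\<in>PP N. E N j - E0 N) = (\<Sum>j\<in>PP N - I N. E N j - E0 N)"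
      by (rule sum.mono_neutral_right) (use finPi symE[OF rN] in \<open>auto simp: I_def\<close>)
    finally have eq: "integral\<^sup>L M (PY N) - E0 N = (\<Sum>j\<in>PP N - I N. E N j - E0 N) / real N ^ r" .
    have E0b: "\<bar>E0 N\<bar> \<le> L ^ r" unfolding E0E by (rule Eb) (use rN in auto)
    have "\<bar>\<Sum>j\<in>PP N - I N. E N j - E0 N\<bar> \<le> (\<Sum>j\<in>PP N - I N. \<bar>E N j - E0 N\<bar>)" by (rule sum_abs)
    also have "\<dots> \<le> real (card (PP N - I N)) * (2 * L ^ r)"
    proof (rule sum_bounded_above)
      fix j assume "j \<in> PP N - I N"
      hence "\<bar>E N j\<bar> \<le> L ^ r" by (intro Eb jk) auto
      thus "\<bar>E N j - E0 N\<bar> \<le> 2 * L ^ r" using E0b by linarith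
    qed
    also have "real (card (PP N - I N)) = real N ^ r - real (card (I N))"
      using IPi[of N] finPi[of N] card_mono[OF finPi IPi, of N]
      by (simp add: card_Diff_subset finite_subset cardPi of_nat_diff)
    finally have "\<bar>\<Sum>j\<in>PP N - I N. E N j - E0 N\<bar> \<le> (real N ^ r - real (card (I N))) * (2 * L ^ r)" .
    hence "\<bar>integral\<^sup>L M (PY N) - E0 N\<bar> \<le> (real N ^ r - real (card (I N))) * (2 * L ^ r) / real N ^ r"
      unfolding eq using Npos by (simp add: divide_right_mono)
    also have "\<dots> = 2 * L ^ r * (1 - real (card (I N)) / real N ^ r)"
      using Npos by (simp add: field_simps)
    finally show ?thesis .
  qed
  have ratio: "(\<lambda>N. real (card (I N)) / real N ^ r) \<longlonglongrightarrow> 1"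
  proof -
    have "(\<lambda>N. \<Prod>i\<in>{0..<r}. 1 - real i * (1 / real N)) \<longlonglongrightarrow> (\<Prod>i\<in>{0..<r}. 1 - real i * 0)"
      by (intro tendsto_prod tendsto_diff tendsto_const tendsto_mult lim_1_over_n)
    hence l: "(\<lambda>N. \<Prod>i\<in>{0..<r}. 1 - real i * (1 / real N)) \<longlonglongrightarrow> 1" by simp
    show ?thesis
    proof (rule Lim_transform_eventually[OF l], rule eventually_sequentiallyI[of "Suc r"])
      fix N assume N: "Suc r \<le> N"
      have "real (card (I N)) / real N ^ r = (\<Prod>i\<in>{0..<r}. real (N - i)) / (\<Prod>i\<in>{0..<r}. real N)"
        by (simp add: cardI)
      also have "\<dots> = (\<Prod>i\<in>{0..<r}. real (N - i) / real N)" by (rule prod_dividef[symmetric])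
      also have "\<dots> = (\<Prod>i\<in>{0..<r}. 1 - real i * (1 / real N))"
        using N by (intro prod.cong refl) (auto simp: of_nat_diff field_simps)
      finally show "(\<Prod>i\<in>{0..<r}. 1 - real i * (1 / real N)) = real (card (I N)) / real N ^ r" by simp
    qed
  qed
  have "(\<lambda>N. 2 * L ^ r * (1 - real (card (I N)) / real N ^ r)) \<longlonglongrightarrow> 2 * L ^ r * (1 - 1)"
    by (intro tendsto_mult tendsto_diff tendsto_const ratio)
  hence g0: "(\<lambda>N. 2 * L ^ r * (1 - real (card (I N)) / real N ^ r)) \<longlonglongrightarrow> 0" by simp
  have "(\<lambda>N. integral\<^sup>L M (PY N) - E0 N) \<longlonglongrightarrow> 0"
  proof (rule Lim_null_comparison[OF _ g0])
    show "\<forall>\<^sub>F N in sequentially. norm (integral\<^sup>L M (PY N) - E0 N) \<le> 2 * L ^ r * (1 - real (card (I N)) / real N ^ r)"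
    proof (rule eventually_sequentiallyI[of "Suc r"])
      fix N assume "Suc r \<le> N"
      thus "norm (integral\<^sup>L M (PY N) - E0 N) \<le> 2 * L ^ r * (1 - real (card (I N)) / real N ^ r)"
        using B[of N] by simp
    qed
  qed
  hence "(\<lambda>N. integral\<^sup>L M (PY N) - (integral\<^sup>L M (PY N) - E0 N)) \<longlonglongrightarrow> (\<Prod>k\<in>{1..r}. \<xi> (\<theta> k)) - 0"
    by (intro tendsto_diff A)
  thus ?thesis by (simp add: E0_def curve_tensor_def)
qed

end
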